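(* Let $G=(V,E,w)$ be a finite undirected graph with positive vertex weights and let $IS$ and $S$ be independent sets of $G$. (a) Suppose there is $I_w\in A_I$ with $IS\subseteq I_w$. If $IS'\subseteq N(IS)$ is an independent set with $w(IS')>w(IS\cap N(IS'))$, then there exists an independent set $IS''\subseteq N(IS')\setminus N[IS]$ such that $w(IS')\le w(IS\cap N(IS'))+w(IS'')$. Moreover, if there is exactly one independent set $IS''\subseteq N(IS')\setminus N[IS]$ satisfying this inequality, then $IS\cup IS''\subseteq I_w$. (b) Suppose $S$ is contained in every MWIS of $G$. Then for every nonempty independent set $S'\subseteq N(S)$ there is an independent set $S''\subseteq N(S')\setminus N[S]$ such that $w(S')<w(S\cap N(S'))+w(S'')$. Moreover, if there is exactly one independent set $S''\subseteq N(S')\setminus N[S]$ satisfying this strict inequality, then $S\cup S''$ is contained in every MWIS of $G$.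
   Context: $G=(V,E,w)$ is a finite simple undirected graph with $w:V\to\mathbb{R}^{+}$. For $S\subseteq V$, $w(S)=\sum_{v\in S}w(v)$ (so $w(\emptyset)=0$). Independent sets are sets of pairwise non-adjacent vertices; the empty set is independent. A MWIS is an independent set of maximum total weight; $A_I$ is the set of all MWISs. $N(S)=\big(\bigcup_{v\in S}N(v)\big)\setminus S$ and $N[S]=N(S)\cup S$. *)

theory Defs
  imports Main "HOL.Real"
begin

definition wgraph :: "'a set \<Rightarrow> ('a \<Rightarrow> 'a \<Rightarrow> bool) \<Rightarrow> ('a \<Rightarrow> real) \<Rightarrow> bool" where
  "wgraph V E w \<longleftrightarrow> finite V \<and> (\<forall>u v. E u v \<longrightarrow> u \<in> V \<and> v \<in> V)
     \<and> (\<forall>u v. E u v \<longrightarrow> E v u) \<and> (\<forall>v. \<not> E v v) \<and> (\<forall>v\<in>V. w v > 0)"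

definition weight :: "('a \<Rightarrow> real) \<Rightarrow> 'a set \<Rightarrow> real" where
  "weight w S = (\<Sum>v\<in>S. w v)"

definition indep :: "'a set \<Rightarrow> ('a \<Rightarrow> 'a \<Rightarrow> bool) \<Rightarrow> 'a set \<Rightarrow> bool" where
  "indep V E S \<longleftrightarrow> S \<subseteq> V \<and> (\<forall>u\<in>S. \<forall>v\<in>S. \<not> E u v)"

definition mwis :: "'a set \<Rightarrow> ('a \<Rightarrow> 'a \<Rightarrow> bool) \<Rightarrow> ('a \<Rightarrow> real) \<Rightarrow> 'a set \<Rightarrow> bool" where
  "mwis V E w I \<longleftrightarrow> indep V E I \<and> (\<forall>J. indep V E J \<longrightarrow> weight w J \<le> weight w I)"

definition nbhd :: "'a set \<Rightarrow> ('a \<Rightarrow> 'a \<Rightarrow> bool) \<Rightarrow> 'a set \<Rightarrow> 'a set" where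
  "nbhd V E S = {v \<in> V. \<exists>u\<in>S. E u v} - S"

definition cnbhd :: "'a set \<Rightarrow> ('a \<Rightarrow> 'a \<Rightarrow> bool) \<Rightarrow> 'a set \<Rightarrow> 'a set" where
  "cnbhd V E S = nbhd V E S \<union> S"

end

theory Submission
  imports Defs
begin


lemma wfin: "wgraph V E w \<Longrightarrow> X \<subseteq> V \<Longrightarrow> finite X"
  unfolding wgraph_def using finite_subset by blast

lemma key:
  assumes G: "wgraph V E w" and I: "indep V E I" and SI: "S \<subseteq> I"
    and T: "indep V E T" and TN: "T \<subseteq> nbhd V E S"
  defines "R \<equiv> I \<inter> nbhd V E T - cnbhd V E S"
  shows "indep V E R" "R \<subseteq> nbhd V E T - cnbhd V E S"
    "indep V E ((I - nbhd V E T) \<union> T)"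
    "weight w ((I - nbhd V E T) \<union> T) = weight w I - (weight w (S \<inter> nbhd V E T) + weight w R) + weight w T"
proof -
  have IV: "I \<subseteq> V" and TV: "T \<subseteq> V" using I T unfolding indep_def by auto
  have fin: "finite I" "finite T" using wfin[OF G] IV TV by auto
  have IT: "I \<inter> T = {}"
  proof (rule ccontr)
    assume "I \<inter> T \<noteq> {}" then obtain y where y: "y \<in> I" "y \<in> T" by blast
    then obtain u where "u \<in> S" "E u y" using TN unfolding nbhd_def by blast
    thus False using I SI y unfolding indep_def by blast
  qed
  have IN: "I \<inter> nbhd V E S = {}"
  proof (rule ccontr)
    assume "I \<inter> nbhd V E S \<noteq> {}" then obtain y where y: "y \<in> I" "y \<in> nbhd V E S" by blast
    then obtain u where "u \<in> S" "E u y" unfolding nbhd_def by blast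
    thus False using I SI y unfolding indep_def by blast
  qed
  show "indep V E R" using I unfolding R_def indep_def by auto
  show "R \<subseteq> nbhd V E T - cnbhd V E S" unfolding R_def by auto
  show "indep V E ((I - nbhd V E T) \<union> T)"
    unfolding indep_def
  proof (intro conjI ballI)
    show "I - nbhd V E T \<union> T \<subseteq> V" using IV TV by auto
  next
    fix u v assume u: "u \<in> I - nbhd V E T \<union> T" and v: "v \<in> I - nbhd V E T \<union> T"
    show "\<not> E u v"
    proof
      assume e: "E u v"
      have sym: "E v u" using G e unfolding wgraph_def by blast
      have uv: "u \<in> V" "v \<in> V" using G e unfolding wgraph_def by blast+
      consider "u \<in> I" "v \<in> I" | "u \<in> T" "v \<in> T" | "u \<in> I - nbhd V E T" "v \<in> T" | "u \<in> T" "v \<in> I - nbhd V E T"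
        using u v by blast
      thus False
      proof cases
        case 1 thus ?thesis using I e unfolding indep_def by blast
      next
        case 2 thus ?thesis using T e unfolding indep_def by blast
      next
        case 3 hence "u \<notin> T" using IT by blast
        hence "u \<in> nbhd V E T" using 3 sym uv unfolding nbhd_def by blast
        thus ?thesis using 3 by blast
      next
        case 4 hence "v \<notin> T" using IT by blast
        hence "v \<in> nbhd V E T" using 4 e uv unfolding nbhd_def by blast
        thus ?thesis using 4 by blast
      qed
    qed
  qed
  have split: "I \<inter> nbhd V E T = (S \<inter> nbhd V E T) \<union> R" using IN SI unfolding R_def cnbhd_def by auto
  have disj: "(S \<inter> nbhd V E T) \<inter> R = {}" unfolding R_def cnbhd_def by auto
  have w1: "weight w (I \<inter> nbhd V E T) = weight w (S \<inter> nbhd V E T) + weight w R"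
    unfolding split weight_def
    by (rule sum.union_disjoint) (use fin SI disj in \<open>auto intro: finite_subset simp: R_def\<close>)
  have w2: "weight w I = weight w (I - nbhd V E T) + weight w (I \<inter> nbhd V E T)"
    unfolding weight_def using fin(1)
    by (metis Diff_Diff_Int Diff_subset inf_commute sum.subset_diff Int_lower1 inf.commute add.commute)
  have w3: "weight w ((I - nbhd V E T) \<union> T) = weight w (I - nbhd V E T) + weight w T"
    unfolding weight_def by (rule sum.union_disjoint) (use fin IT in auto)
  show "weight w ((I - nbhd V E T) \<union> T) = weight w I - (weight w (S \<inter> nbhd V E T) + weight w R) + weight w T"
    using w1 w2 w3 by linarith
qed

lemma mwis_ex:
  assumes G: "wgraph V E w" shows "\<exists>I. mwis V E w I"
proof -
  let ?A = "{J. indep V E J}"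
  have fA: "finite ?A" using G unfolding wgraph_def indep_def
    by (metis (no_types, lifting) Collect_mono Pow_def finite_Pow_iff finite_subset)
  have ne: "{} \<in> ?A" unfolding indep_def by auto
  have "Max (weight w ` ?A) \<in> weight w ` ?A" using fA ne by (intro Max_in) auto
  then obtain I where I: "I \<in> ?A" "weight w I = Max (weight w ` ?A)" by auto
  have "\<forall>J\<in>?A. weight w J \<le> weight w I" using I fA by auto
  thus ?thesis using I(1) unfolding mwis_def by auto
qed

theorem theorem2p2:
  fixes V :: "'a set" and E :: "'a \<Rightarrow> 'a \<Rightarrow> bool" and w :: "'a \<Rightarrow> real"
    and IS S :: "'a set"
  assumes G: "wgraph V E w"
    and IS_ind: "indep V E IS" and S_ind: "indep V E S"
  shows
    "(\<forall>Iw. mwis V E w Iw \<and> IS \<subseteq> Iw \<longrightarrow>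
       (\<forall>IS'. indep V E IS' \<and> IS' \<subseteq> nbhd V E IS
              \<and> weight w IS' > weight w (IS \<inter> nbhd V E IS') \<longrightarrow>
          (\<exists>IS''. indep V E IS'' \<and> IS'' \<subseteq> nbhd V E IS' - cnbhd V E IS
                  \<and> weight w IS' \<le> weight w (IS \<inter> nbhd V E IS') + weight w IS'')
        \<and> (\<forall>IS''. (indep V E IS'' \<and> IS'' \<subseteq> nbhd V E IS' - cnbhd V E IS
                  \<and> weight w IS' \<le> weight w (IS \<inter> nbhd V E IS') + weight w IS'')
                 \<and> (\<forall>X. indep V E X \<and> X \<subseteq> nbhd V E IS' - cnbhd V E IS
                        \<and> weight w IS' \<le> weight w (IS \<inter> nbhd V E IS') + weight w X
                        \<longrightarrow> X = IS'')
                 \<longrightarrow> IS \<union> IS'' \<subseteq> Iw)))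
   \<and>
    ((\<forall>I. mwis V E w I \<longrightarrow> S \<subseteq> I) \<longrightarrow>
       (\<forall>S'. indep V E S' \<and> S' \<noteq> {} \<and> S' \<subseteq> nbhd V E S \<longrightarrow>
          (\<exists>S''. indep V E S'' \<and> S'' \<subseteq> nbhd V E S' - cnbhd V E S
                 \<and> weight w S' < weight w (S \<inter> nbhd V E S') + weight w S'')
        \<and> (\<forall>S''. (indep V E S'' \<and> S'' \<subseteq> nbhd V E S' - cnbhd V E S
                  \<and> weight w S' < weight w (S \<inter> nbhd V E S') + weight w S'')
                 \<and> (\<forall>X. indep V E X \<and> X \<subseteq> nbhd V E S' - cnbhd V E S
                        \<and> weight w S' < weight w (S \<inter> nbhd V E S') + weight w X
                        \<longrightarrow> X = S'')
                 \<longrightarrow> (\<forall>I. mwis V E w I \<longrightarrow> S \<union> S'' \<subseteq> I))))"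
proof (intro conjI allI impI)
  fix Iw IS' assume a: "mwis V E w Iw \<and> IS \<subseteq> Iw"
    and b: "indep V E IS' \<and> IS' \<subseteq> nbhd V E IS \<and> weight w IS' > weight w (IS \<inter> nbhd V E IS')"
  let ?R = "Iw \<inter> nbhd V E IS' - cnbhd V E IS"
  have I: "indep V E Iw" and mx: "\<forall>J. indep V E J \<longrightarrow> weight w J \<le> weight w Iw"
    using a unfolding mwis_def by auto
  note k = key[OF G I _ _ _, of IS IS'] 
  have k1: "indep V E ?R" "?R \<subseteq> nbhd V E IS' - cnbhd V E IS" and k3: "indep V E ((Iw - nbhd V E IS') \<union> IS')"
   and k4: "weight w ((Iw - nbhd V E IS') \<union> IS') = weight w Iw - (weight w (IS \<inter> nbhd V E IS') + weight w ?R) + weight w IS'"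
    using k a b by auto
  have R: "indep V E ?R \<and> ?R \<subseteq> nbhd V E IS' - cnbhd V E IS
                  \<and> weight w IS' \<le> weight w (IS \<inter> nbhd V E IS') + weight w ?R"
    using k1 k3 k4 mx by force
  thus "\<exists>IS''. indep V E IS'' \<and> IS'' \<subseteq> nbhd V E IS' - cnbhd V E IS
                  \<and> weight w IS' \<le> weight w (IS \<inter> nbhd V E IS') + weight w IS''" by blast
  fix IS'' assume c: "(indep V E IS'' \<and> IS'' \<subseteq> nbhd V E IS' - cnbhd V E IS
                  \<and> weight w IS' \<le> weight w (IS \<inter> nbhd V E IS') + weight w IS'')
                 \<and> (\<forall>X. indep V E X \<and> X \<subseteq> nbhd V E IS' - cnbhd V E IS
                        \<and> weight w IS' \<le> weight w (IS \<inter> nbhd V E IS') + weight w X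
                        \<longrightarrow> X = IS'')"
  hence "?R = IS''" using R by blast
  thus "IS \<union> IS'' \<subseteq> Iw" using a by blast
next
  fix S' assume a: "\<forall>I. mwis V E w I \<longrightarrow> S \<subseteq> I"
    and b: "indep V E S' \<and> S' \<noteq> {} \<and> S' \<subseteq> nbhd V E S"
  have R: "indep V E (I \<inter> nbhd V E S' - cnbhd V E S) \<and> (I \<inter> nbhd V E S' - cnbhd V E S) \<subseteq> nbhd V E S' - cnbhd V E S
                 \<and> weight w S' < weight w (S \<inter> nbhd V E S') + weight w (I \<inter> nbhd V E S' - cnbhd V E S)"
    if m: "mwis V E w I" for I
  proof -
    let ?R = "I \<inter> nbhd V E S' - cnbhd V E S"
    have I: "indep V E I" and mx: "\<forall>J. indep V E J \<longrightarrow> weight w J \<le> weight w I"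
      using m unfolding mwis_def by auto
    have SI: "S \<subseteq> I" using a m by blast
    note k = key[OF G I SI, of S']
    have k1: "indep V E ?R" "?R \<subseteq> nbhd V E S' - cnbhd V E S" and k3: "indep V E ((I - nbhd V E S') \<union> S')"
     and k4: "weight w ((I - nbhd V E S') \<union> S') = weight w I - (weight w (S \<inter> nbhd V E S') + weight w ?R) + weight w S'"
      using k b by auto
    let ?J = "(I - nbhd V E S') \<union> S'"
    obtain y where y: "y \<in> S'" using b by blast
    then obtain x where x: "x \<in> S" "E x y" using b unfolding nbhd_def by blast
    have xV: "x \<in> V" using G x unfolding wgraph_def by blast
    have "x \<notin> S'" using b x unfolding nbhd_def by blast
    hence "x \<in> nbhd V E S'" using xV x G y unfolding nbhd_def wgraph_def by blast
    hence "x \<notin> ?J" using \<open>x \<notin> S'\<close> by blast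
    hence "\<not> S \<subseteq> ?J" using x by blast
    hence "\<not> mwis V E w ?J" using a by blast
    hence "weight w ?J < weight w I" using k3 mx unfolding mwis_def by force
    thus ?thesis using k1 k4 by linarith
  qed
  obtain I0 where "mwis V E w I0" using mwis_ex[OF G] by blast
  from R[OF this] show "\<exists>S''. indep V E S'' \<and> S'' \<subseteq> nbhd V E S' - cnbhd V E S
                 \<and> weight w S' < weight w (S \<inter> nbhd V E S') + weight w S''" by blast
  fix S'' assume c: "(indep V E S'' \<and> S'' \<subseteq> nbhd V E S' - cnbhd V E S
                  \<and> weight w S' < weight w (S \<inter> nbhd V E S') + weight w S'')
                 \<and> (\<forall>X. indep V E X \<and> X \<subseteq> nbhd V E S' - cnbhd V E S
                        \<and> weight w S' < weight w (S \<inter> nbhd V E S') + weight w X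
                        \<longrightarrow> X = S'')"
  fix I assume m: "mwis V E w I"
  have "I \<inter> nbhd V E S' - cnbhd V E S = S''" using c R[OF m] by blast
  thus "S \<union> S'' \<subseteq> I" using a m by blast
qed

end
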